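(* Let $T_l$ be a $2m$ deck-shuffler IET and let $H_l:[0,1)\to[0,1)$, $H_l(x)=\sum_{n=0}^\infty \chi_B(T_l^n x)/2^{n+1}$, and $\mu_l=(H_l)_*\mathrm{Leb}$. Then: (a) $E_2\circ H_l=H_l\circ T_l$ on $[0,1)$; (b) $\mu_l$ is $E_2$-invariant (more generally $(H_l)_*\nu$ is $E_2$-invariant for every $T_l$-invariant Borel probability measure $\nu$); (c) $H_l$ is right-continuous; (d) $H_l$ is non-decreasing; (e) for $z\in[0,1)$, $\mu_l(\{z\})>0$ if and only if $H_l^{-1}(\{z\})$ is an interval of positive length; in that case there is a positive integer $n$ with $T_l^n(x)=x$ for all $x\in H_l^{-1}(\{z\})$. Conversely, if $a<b$ and there is a positive integer $n$ with $T_l^n(x)=x$ for all $x\in[a,b]$, then $H_l([a,b])$ is a finite set; (f) if $T_l$ is minimal, then $H_l$ is strictly increasing, and hence is an injective right-continuous map intertwining $T_l$ with $E_2$.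
   Context: $E_2(x)=2x\bmod1$ on $[0,1)\cong\mathbb{R}/\mathbb{Z}$. A $2m$ deck-shuffler IET $T_l$ is the map $[0,1)\to[0,1)$ determined by a length vector $l$ giving a partition of $[0,1)$ into consecutive left-closed right-open intervals $A_1<\dots<A_m<B_1<\dots<B_m$ of positive lengths, with $T_l(x)=x+|B_1|+\dots+|B_i|$ for $x\in A_i$ and $T_l(x)=x-|A_i|-\dots-|A_m|$ for $x\in B_i$. $B=B_1\cup\dots\cup B_m$, $\chi_B$ is its indicator function, and Leb is Lebesgue measure on $[0,1)$. $T_l$ is minimal if every orbit is dense in $[0,1)$. *)

theory Defs
  imports "HOL-Probability.Probability"
begin

text \<open>A 2m deck-shuffler IET. The length vector is l :: nat => real with entries
 l 0, ..., l (2m-1): l i = |A_(i+1)| for i < m and l (m+i) = |B_(i+1)| for i < m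
 (0-based indices below).\<close>

definition ds_valid :: "nat \<Rightarrow> (nat \<Rightarrow> real) \<Rightarrow> bool" where
  "ds_valid m l \<longleftrightarrow> m \<ge> 1 \<and> (\<forall>i<2*m. l i > 0) \<and> (\<Sum>i<2*m. l i) = 1"

definition ds_A :: "nat \<Rightarrow> (nat \<Rightarrow> real) \<Rightarrow> nat \<Rightarrow> real set" where
  "ds_A m l i = {(\<Sum>j<i. l j) ..< (\<Sum>j<Suc i. l j)}"

definition ds_B :: "nat \<Rightarrow> (nat \<Rightarrow> real) \<Rightarrow> nat \<Rightarrow> real set" where
  "ds_B m l i = {(\<Sum>j<m+i. l j) ..< (\<Sum>j<Suc (m+i). l j)}"

definition ds_Bset :: "nat \<Rightarrow> (nat \<Rightarrow> real) \<Rightarrow> real set" where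
  "ds_Bset m l = (\<Union>i<m. ds_B m l i)"

text \<open>The intervals are pairwise disjoint, so at most one summand
 is nonzero; outside [0,1) the map is the identity (irrelevant).\<close>
definition ds_T :: "nat \<Rightarrow> (nat \<Rightarrow> real) \<Rightarrow> real \<Rightarrow> real" where
  "ds_T m l x = x
     + (\<Sum>i<m. indicator (ds_A m l i) x * (\<Sum>j\<in>{m..m+i}. l j))
     - (\<Sum>i<m. indicator (ds_B m l i) x * (\<Sum>j\<in>{i..<m}. l j))"

definition ds_H :: "nat \<Rightarrow> (nat \<Rightarrow> real) \<Rightarrow> real \<Rightarrow> real" where
  "ds_H m l x = (\<Sum>n. indicator (ds_Bset m l) ((ds_T m l ^^ n) x) / 2 ^ (n + 1))"

definition E2 :: "real \<Rightarrow> real" where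
  "E2 x = frac (2 * x)"

definition Leb01 :: "real measure" where
  "Leb01 = restrict_space lborel {0..<1}"

definition ds_mu :: "nat \<Rightarrow> (nat \<Rightarrow> real) \<Rightarrow> real measure" where
  "ds_mu m l = distr Leb01 borel (ds_H m l)"

definition ds_orbit :: "nat \<Rightarrow> (nat \<Rightarrow> real) \<Rightarrow> real \<Rightarrow> real set" where
  "ds_orbit m l x = {y \<in> {0..<1}. \<exists>n. (ds_T m l ^^ n) x = y \<or> (ds_T m l ^^ n) y = x}"

definition ds_minimal :: "nat \<Rightarrow> (nat \<Rightarrow> real) \<Rightarrow> bool" where
  "ds_minimal m l \<longleftrightarrow> (\<forall>x\<in>{0..<1}. {0..<1} \<subseteq> closure (ds_orbit m l x))"

end

theory Submission
  imports Defs
begin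


lemma Ico_chain_union:
  fixes f :: "nat \<Rightarrow> real"
  assumes "\<And>k. k < n \<Longrightarrow> f k \<le> f (Suc k)"
  shows "f 0 \<le> f n \<and> (\<Union>k<n. {f k..<f (Suc k)}) = {f 0..<f n}"
  using assms
proof (induction n)
  case 0 then show ?case by simp
next
  case (Suc n)
  then have IH: "f 0 \<le> f n" "(\<Union>k<n. {f k..<f (Suc k)}) = {f 0..<f n}" by auto
  have "f n \<le> f (Suc n)" using Suc.prems by simp
  moreover have "(\<Union>k<Suc n. {f k..<f (Suc k)}) = (\<Union>k<n. {f k..<f (Suc k)}) \<union> {f n..<f (Suc n)}"
    by (simp add: lessThan_Suc Un_commute)
  ultimately show ?case using IH by auto
qed

lemma Ico_chain_indicator:
  fixes f :: "nat \<Rightarrow> real"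
  assumes "\<And>k. k < n \<Longrightarrow> f k \<le> f (Suc k)"
  shows "(\<Sum>k<n. indicator {f k..<f (Suc k)} x :: ennreal) = indicator {f 0..<f n} x"
  using assms
proof (induction n)
  case 0 then show ?case by simp
next
  case (Suc n)
  then have IH: "(\<Sum>k<n. indicator {f k..<f (Suc k)} x :: ennreal) = indicator {f 0..<f n} x" by auto
  have "f 0 \<le> f n" using Ico_chain_union[of n f] Suc.prems by auto
  moreover have "f n \<le> f (Suc n)" using Suc.prems by simp
  ultimately show ?case using IH by (auto simp: indicator_def)
qed

locale ds =
  fixes m :: nat and l :: "nat \<Rightarrow> real"
  assumes valid: "ds_valid m l"
begin

abbreviation "T \<equiv> ds_T m l"
abbreviation "H \<equiv> ds_H m l"
abbreviation "Bs \<equiv> ds_Bset m l"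

definition P :: "nat \<Rightarrow> real" where "P k = (\<Sum>j<k. l j)"
definition cA :: "nat \<Rightarrow> real" where "cA i = (\<Sum>j\<in>{m..m+i}. l j)"
definition dB :: "nat \<Rightarrow> real" where "dB i = (\<Sum>j\<in>{i..<m}. l j)"
definition Q :: "nat \<Rightarrow> real" where "Q i = P i + (\<Sum>j\<in>{m..<m+i}. l j)"

lemma m1: "m \<ge> 1" and lpos: "i < 2*m \<Longrightarrow> 0 < l i" and P2m: "P (2*m) = 1"
  using valid by (auto simp: ds_valid_def P_def)

lemma P0[simp]: "P 0 = 0" by (simp add: P_def)
lemma P_Suc: "P (Suc k) = P k + l k" by (simp add: P_def)

lemma P_mono: "i \<le> j \<Longrightarrow> j \<le> 2*m \<Longrightarrow> P i \<le> P j"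
  unfolding P_def by (rule sum_mono2) (auto intro!: less_imp_le[OF lpos])

lemma P_nonneg: "k \<le> 2*m \<Longrightarrow> 0 \<le> P k" using P_mono[of 0 k] by simp
lemma P_le1: "k \<le> 2*m \<Longrightarrow> P k \<le> 1" using P_mono[of k "2*m"] P2m by simp

lemma A_eq: "ds_A m l i = {P i..<P (Suc i)}" by (simp add: ds_A_def P_def)
lemma B_eq: "ds_B m l i = {P (m+i)..<P (Suc (m+i))}" by (simp add: ds_B_def P_def)

lemma P_disj: "i < 2*m \<Longrightarrow> j < 2*m \<Longrightarrow> x \<in> {P i..<P (Suc i)} \<Longrightarrow> x \<in> {P j..<P (Suc j)} \<Longrightarrow> i = j"
proof (rule ccontr)
  assume a: "i < 2*m" "j < 2*m" "x \<in> {P i..<P (Suc i)}" "x \<in> {P j..<P (Suc j)}" "i \<noteq> j"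
  show False
  proof (cases "i < j")
    case True then show ?thesis using a P_mono[of "Suc i" j] by auto
  next
    case False then show ?thesis using a P_mono[of "Suc j" i] by auto
  qed
qed

lemma Bset_eq: "Bs = {P m..<1}"
proof -
  have "Bs = (\<Union>i<m. {P (m+i)..<P (Suc (m+i))})" by (simp add: ds_Bset_def B_eq)
  also have "\<dots> = {P (m+0)..<P (m+m)}"
    using Ico_chain_union[of m "\<lambda>i. P (m+i)"] P_mono by auto
  finally show ?thesis using P2m by (simp add: mult_2)
qed

lemma A_cover: "x \<in> {0..<P m} \<Longrightarrow> \<exists>i<m. x \<in> ds_A m l i"
proof -
  assume x: "x \<in> {0..<P m}"
  have "(\<Union>i<m. {P i..<P (Suc i)}) = {P 0..<P m}"
    using Ico_chain_union[of m P] P_mono by auto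
  then have "x \<in> (\<Union>i<m. {P i..<P (Suc i)})" using x by simp
  then show ?thesis by (auto simp: A_eq)
qed

lemma B_cover: "x \<in> Bs \<Longrightarrow> \<exists>i<m. x \<in> ds_B m l i"
  by (auto simp: ds_Bset_def)

lemma A_sub: "i < m \<Longrightarrow> x \<in> ds_A m l i \<Longrightarrow> 0 \<le> x \<and> x < P m"
  using P_nonneg[of i] P_mono[of "Suc i" m] by (auto simp: A_eq)

lemma B_sub: "i < m \<Longrightarrow> x \<in> ds_B m l i \<Longrightarrow> P m \<le> x \<and> x < 1"
  using P_mono[of m "m+i"] P_le1[of "Suc (m+i)"] by (auto simp: B_eq)

lemma T_A: assumes i: "i < m" and x: "x \<in> ds_A m l i" shows "T x = x + cA i"
proof -
  have 1: "(\<Sum>j<m. indicator (ds_A m l j) x * (\<Sum>k\<in>{m..m+j}. l k)) = (\<Sum>j<m. if j = i then cA j else 0)"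
  proof (rule sum.cong)
    fix j assume j: "j \<in> {..<m}"
    show "indicator (ds_A m l j) x * (\<Sum>k\<in>{m..m+j}. l k) = (if j = i then cA j else 0)"
    proof (cases "j = i")
      case True then show ?thesis using x by (simp add: cA_def)
    next
      case False
      then have "x \<notin> ds_A m l j" using P_disj[of i j x] i j x by (auto simp: A_eq)
      then show ?thesis using False by simp
    qed
  qed simp
  have nb: "x \<notin> ds_B m l j" if "j<m" for j using B_sub[OF that] A_sub[OF i x] by force
  have 2: "(\<Sum>j<m. indicator (ds_B m l j) x * (\<Sum>k\<in>{j..<m}. l k)) = 0"
    using nb by (intro sum.neutral) (auto simp: indicator_def)
  show ?thesis unfolding ds_T_def 1 2 using i by simp
qed

lemma T_B: assumes i: "i < m" and x: "x \<in> ds_B m l i" shows "T x = x - dB i"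
proof -
  have 1: "(\<Sum>j<m. indicator (ds_B m l j) x * (\<Sum>k\<in>{j..<m}. l k)) = (\<Sum>j<m. if j = i then dB j else 0)"
  proof (rule sum.cong)
    fix j assume j: "j \<in> {..<m}"
    show "indicator (ds_B m l j) x * (\<Sum>k\<in>{j..<m}. l k) = (if j = i then dB j else 0)"
    proof (cases "j = i")
      case True then show ?thesis using x by (simp add: dB_def)
    next
      case False
      then have "x \<notin> ds_B m l j" using P_disj[of "m+i" "m+j" x] i j x by (auto simp: B_eq)
      then show ?thesis using False by simp
    qed
  qed simp
  have 2: "(\<Sum>j<m. indicator (ds_A m l j) x * (\<Sum>k\<in>{m..m+j}. l k)) = 0"
    using B_sub[OF i x] A_sub by (intro sum.neutral) (force simp: indicator_def)
  show ?thesis unfolding ds_T_def 1 2 using i by simp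
qed

lemma T_out: assumes "x \<notin> {0..<1}" shows "T x = x"
proof -
  have a: "x \<notin> ds_A m l j" if "j < m" for j using A_sub[OF that] P_le1[of m] assms by force
  have b: "x \<notin> ds_B m l j" if "j < m" for j using B_sub[OF that] P_nonneg[of m] assms by force
  show ?thesis unfolding ds_T_def using a b by simp
qed

lemma Bs_sub: "Bs \<subseteq> {0..<1}" using Bset_eq P_nonneg[of m] by auto

lemma sum_split3: "i \<le> m \<Longrightarrow> P (m+i) = P i + dB i + (\<Sum>j\<in>{m..<m+i}. l j)"
  unfolding P_def dB_def lessThan_atLeast0
  by (simp add: sum.atLeastLessThan_concat)

lemma cA_eq: "cA i = (\<Sum>j\<in>{m..<m+i}. l j) + l (m+i)"
  unfolding cA_def by (simp add: atLeastLessThanSuc_atLeastAtMost[symmetric])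

lemma Q0[simp]: "Q 0 = 0" by (simp add: Q_def)
lemma Q_Suc: "Q (Suc i) = Q i + l i + l (m+i)" by (simp add: Q_def P_Suc)
lemma Qm: "Q m = 1"
proof -
  have "Q m = P (m+m)" unfolding Q_def P_def lessThan_atLeast0 by (simp add: sum.atLeastLessThan_concat)
  then show ?thesis using P2m by (simp add: mult_2)
qed
lemma Q_step: "i < m \<Longrightarrow> Q i \<le> Q (Suc i)" using lpos[of i] lpos[of "m+i"] by (simp add: Q_Suc)
lemma Q_mono: "i \<le> j \<Longrightarrow> j \<le> m \<Longrightarrow> Q i \<le> Q j"
proof (induction j)
  case 0 then show ?case by simp
next
  case (Suc j) then show ?case using Q_step[of j] by (cases "i = Suc j") auto
qed

lemma idA1: "P i + cA i = Q i + l (m+i)" by (simp add: Q_def cA_eq)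
lemma idA2: "P (Suc i) + cA i = Q (Suc i)" by (simp add: Q_Suc Q_def cA_eq P_Suc)
lemma idB1: "i \<le> m \<Longrightarrow> P (m+i) - dB i = Q i" by (simp add: sum_split3 Q_def)
lemma idB2: "i \<le> m \<Longrightarrow> P (Suc (m+i)) - dB i = Q i + l (m+i)"
  by (simp add: P_Suc sum_split3 Q_def)

end

context ds begin

lemma lnn: "k < 2*m \<Longrightarrow> 0 \<le> l k" using lpos[of k] by simp

lemma TA_img: "i < m \<Longrightarrow> x \<in> ds_A m l i \<Longrightarrow> Q i + l (m+i) \<le> T x \<and> T x < Q (Suc i)"
  using T_A[of i x] idA1[of i] idA2[of i] by (auto simp: A_eq)

lemma TB_img: "i < m \<Longrightarrow> x \<in> ds_B m l i \<Longrightarrow> Q i \<le> T x \<and> T x < Q i + l (m+i)"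
  using T_B[of i x] idB1[of i] idB2[of i] by (auto simp: B_eq)

lemma Q_bounds: "i < m \<Longrightarrow> 0 \<le> Q i \<and> Q i + l (m+i) \<le> Q (Suc i) \<and> Q (Suc i) \<le> 1"
  using Q_mono[of 0 i] Q_mono[of "Suc i" m] Qm lpos[of i] by (auto simp: Q_Suc)

lemma Bs_iff: "x \<in> {0..<1} \<Longrightarrow> x \<in> Bs \<longleftrightarrow> P m \<le> x"
  using Bset_eq by auto

lemma T_range: assumes "x \<in> {0..<1}" shows "T x \<in> {0..<1}"
proof (cases "P m \<le> x")
  case True
  then have "x \<in> Bs" using Bs_iff assms by auto
  then obtain i where "i < m" "x \<in> ds_B m l i" using B_cover by blast
  then show ?thesis using TB_img[of i x] Q_bounds[of i] lnn[of "m+i"] by auto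
next
  case False
  then obtain i where "i < m" "x \<in> ds_A m l i" using A_cover assms by force
  then show ?thesis using TA_img[of i x] Q_bounds[of i] lnn[of "m+i"] by auto
qed

lemma cA_mono: "i \<le> j \<Longrightarrow> j < m \<Longrightarrow> cA i \<le> cA j"
  unfolding cA_def by (rule sum_mono2) (auto intro!: lnn)

lemma dB_anti: "i \<le> j \<Longrightarrow> dB j \<le> dB i"
  unfolding dB_def by (rule sum_mono2) (auto intro!: lnn)

lemma dB_pos: "i < m \<Longrightarrow> l (m-1) \<le> dB i"
  unfolding dB_def using m1 by (intro member_le_sum) (auto intro!: lnn)

lemma A_idx_le: "i < m \<Longrightarrow> j < m \<Longrightarrow> x \<in> ds_A m l i \<Longrightarrow> y \<in> ds_A m l j \<Longrightarrow> x < y \<Longrightarrow> i \<le> j"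
  using P_mono[of "Suc j" i] by (force simp: A_eq)

lemma B_idx_le: "i < m \<Longrightarrow> j < m \<Longrightarrow> x \<in> ds_B m l i \<Longrightarrow> y \<in> ds_B m l j \<Longrightarrow> x < y \<Longrightarrow> i \<le> j"
  using P_mono[of "Suc (m+j)" "m+i"] by (force simp: B_eq)

lemma T_A_mono: "i < m \<Longrightarrow> j < m \<Longrightarrow> x \<in> ds_A m l i \<Longrightarrow> y \<in> ds_A m l j \<Longrightarrow> x < y \<Longrightarrow> T x < T y"
  using A_idx_le[of i j x y] cA_mono[of i j] T_A[of i x] T_A[of j y] by auto

lemma T_B_mono: "i < m \<Longrightarrow> j < m \<Longrightarrow> x \<in> ds_B m l i \<Longrightarrow> y \<in> ds_B m l j \<Longrightarrow> x < y \<Longrightarrow> T x < T y"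
  using B_idx_le[of i j x y] dB_anti[of i j] T_B[of i x] T_B[of j y] by auto

lemma step:
  assumes x: "x \<in> {0..<1}" and y: "y \<in> {0..<1}" and xy: "x < y"
  shows "(x \<notin> Bs \<and> y \<in> Bs) \<or> ((x \<in> Bs \<longleftrightarrow> y \<in> Bs) \<and> T x < T y)"
proof (cases "P m \<le> x")
  case True
  then have "x \<in> Bs" "y \<in> Bs" using Bs_iff x y xy by auto
  then obtain i j where "i < m" "x \<in> ds_B m l i" "j < m" "y \<in> ds_B m l j" using B_cover by metis
  then show ?thesis using T_B_mono xy \<open>x \<in> Bs\<close> \<open>y \<in> Bs\<close> by blast
next
  case False
  then have xn: "x \<notin> Bs" using Bs_iff x by auto
  show ?thesis
  proof (cases "P m \<le> y")
    case True then show ?thesis using xn Bs_iff y by auto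
  next
    case False
    then have yn: "y \<notin> Bs" using Bs_iff y by auto
    obtain i where "i < m" "x \<in> ds_A m l i" using A_cover x \<open>\<not> P m \<le> x\<close> by force
    moreover obtain j where "j < m" "y \<in> ds_A m l j" using A_cover y False by force
    ultimately show ?thesis using T_A_mono xy xn yn by blast
  qed
qed

lemma T_AB_ne:
  assumes "i < m" "x \<in> ds_A m l i" "j < m" "y \<in> ds_B m l j" shows "T x \<noteq> T y"
proof -
  have a: "Q i + l (m+i) \<le> T x" "T x < Q (Suc i)" using TA_img assms by auto
  have b: "Q j \<le> T y" "T y < Q j + l (m+j)" using TB_img assms by auto
  consider "i < j" | "i = j" | "j < i" by linarith
  then show ?thesis
  proof cases
    case 1 then have "Q (Suc i) \<le> Q j" using Q_mono assms by auto
    then show ?thesis using a b by auto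
  next
    case 2 then show ?thesis using a b by auto
  next
    case 3 then have "Q (Suc j) \<le> Q i" using Q_mono assms by auto
    moreover have "Q j + l (m+j) \<le> Q (Suc j)" using Q_bounds assms by auto
    ultimately show ?thesis using a b lnn[of "m+i"] assms by auto
  qed
qed

lemma T_inj: "inj_on T {0..<1}"
proof (rule inj_onI)
  have *: "T x \<noteq> T y" if x: "x \<in> {0..<1}" and y: "y \<in> {0..<1}" and xy: "x < y" for x y
  proof (cases "x \<notin> Bs \<and> y \<in> Bs")
    case True
    then obtain j where "j < m" "y \<in> ds_B m l j" using B_cover by blast
    moreover obtain i where "i < m" "x \<in> ds_A m l i" using A_cover x True Bs_iff by force
    ultimately show ?thesis using T_AB_ne by blast
  next
    case False then show ?thesis using step[OF x y xy] by auto
  qed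
  fix x y assume "x \<in> {0..<1}" "y \<in> {0..<1}" "T x = T y"
  then show "x = y" using *[of x y] *[of y x] by (cases x y rule: linorder_cases) auto
qed

lemma Bs_dec: "x \<in> Bs \<Longrightarrow> T x \<le> x - l (m-1)"
  using B_cover T_B dB_pos by fastforce

lemma T_meas[measurable]: "T \<in> borel_measurable borel"
  unfolding ds_T_def ds_A_def ds_B_def by measurable

lemma Bs_meas[measurable]: "Bs \<in> sets borel"
  using Bset_eq by simp

lemma Tn_range: "x \<in> {0..<1} \<Longrightarrow> (T^^n) x \<in> {0..<1}"
  by (induction n) (auto simp del: atLeastLessThan_iff intro: T_range)

lemma Tn_out: "x \<notin> {0..<1} \<Longrightarrow> (T^^n) x = x"
  by (induction n) (auto simp: T_out simp del: atLeastLessThan_iff)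

lemma Tn_inj: "inj_on (T^^n) {0..<1}"
proof (induction n)
  case 0 then show ?case by simp
next
  case (Suc n)
  have "inj_on (T \<circ> (T^^n)) {0..<1}"
    using Suc Tn_range T_inj by (intro comp_inj_on) (auto simp: inj_on_def simp del: atLeastLessThan_iff)
  then show ?case by (metis funpow.simps(2))
qed

lemma Tn_meas[measurable]: "(T^^n) \<in> borel_measurable borel"
proof (induction n)
  case 0 then show ?case by simp
next
  case (Suc n)
  have "T \<circ> (T^^n) \<in> borel_measurable borel" using Suc by (intro measurable_comp[OF _ T_meas])
  then show ?case by simp
qed

end

context ds begin

definition dg :: "nat \<Rightarrow> real \<Rightarrow> real" where "dg n x = indicator Bs ((T^^n) x)"
definition S :: "nat \<Rightarrow> real \<Rightarrow> real" where "S n x = (\<Sum>j<n. dg j x / 2^(j+1))"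

lemma H_eq: "H x = (\<Sum>n. dg n x / 2^(n+1))" by (simp add: ds_H_def dg_def)

lemma dg01: "dg n x = 0 \<or> dg n x = 1" by (simp add: dg_def indicator_def)
lemma dg_nonneg: "0 \<le> dg n x" by (simp add: dg_def)
lemma dg_le1: "dg n x \<le> 1" by (simp add: dg_def indicator_def)

lemma geo: "summable (\<lambda>n. (1/2::real)^n / 2)" "(\<Sum>n. (1/2::real)^n / 2) = 1"
proof -
  show s: "summable (\<lambda>n. (1/2::real)^n / 2)" by (intro summable_divide summable_geometric) simp
  have "(\<Sum>n. (1/2::real)^n / 2) = (\<Sum>n. (1/2::real)^n) / 2" by (intro suminf_divide summable_geometric) simp
  also have "\<dots> = 1" by (subst suminf_geometric) auto
  finally show "(\<Sum>n. (1/2::real)^n / 2) = 1" .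
qed

lemma term_le: "dg n x / 2^(n+1) \<le> (1/2::real)^n / 2"
proof -
  have "dg n x / 2^(n+1) \<le> 1 / 2^(n+1)" by (rule divide_right_mono) (auto simp: dg_le1)
  then show ?thesis by (simp add: power_one_over mult.commute)
qed

lemma summ: "summable (\<lambda>n. dg n x / 2^(n+1))"
proof (rule summable_comparison_test'[OF geo(1), of 0])
  fix n :: nat
  have "norm (dg n x / 2^(n+1)) = dg n x / 2^(n+1)" using dg_nonneg[of n x] by simp
  then show "norm (dg n x / 2^(n+1)) \<le> (1/2)^n / 2" using term_le[of n x] by linarith
qed

lemma H_nonneg: "0 \<le> H x"
  unfolding H_eq by (intro suminf_nonneg summ) (simp add: dg_nonneg)

lemma H_le1: "H x \<le> 1"
proof -
  have "H x \<le> (\<Sum>n. (1/2::real)^n / 2)" unfolding H_eq by (intro suminf_le summ geo term_le)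
  then show ?thesis using geo by simp
qed

lemma dg_Suc: "dg (Suc n) x = dg n (T x)" unfolding dg_def funpow_Suc_right by simp

lemma H_head: "H x = dg 0 x / 2 + H (T x) / 2"
proof -
  have "H (T x) / 2 = (\<Sum>n. dg n (T x) / 2^(n+1) / 2)"
    unfolding H_eq by (rule suminf_divide[symmetric]) (rule summ)
  also have "\<dots> = (\<Sum>n. dg (Suc n) x / 2^(Suc n + 1))" by (simp add: dg_Suc)
  also have "\<dots> = H x - dg 0 x / 2" unfolding H_eq by (subst suminf_split_head[OF summ]) simp
  finally show ?thesis by linarith
qed

lemma dg_shift: "dg 0 ((T^^n) x) = dg n x" by (simp add: dg_def)
lemma dg_shift2: "dg j ((T^^n) x) = dg (j+n) x" by (simp add: dg_def funpow_add)

lemma H_split: "H x = S n x + H ((T^^n) x) / 2^n"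
proof (induction n)
  case 0 then show ?case by (simp add: S_def)
next
  case (Suc n)
  have "H ((T^^n) x) = dg n x / 2 + H ((T^^Suc n) x) / 2"
    using H_head[of "(T^^n) x"] by (simp add: dg_shift)
  then show ?case using Suc by (simp add: S_def field_simps)
qed

lemma S_le: "S n x \<le> 1 - 1/2^n"
proof (induction n)
  case 0 then show ?case by (simp add: S_def)
next
  case (Suc n)
  have "S (Suc n) x = S n x + dg n x / 2^(n+1)" by (simp add: S_def)
  also have "\<dots> \<le> 1 - 1/2^n + 1/2^(n+1)" using Suc dg_le1[of n x] by (intro add_mono) (auto simp: divide_right_mono)
  also have "\<dots> = 1 - 1/2^Suc n" by (simp add: field_simps)
  finally show ?case .
qed

lemma S_nonneg: "0 \<le> S n x" unfolding S_def by (intro sum_nonneg) (simp add: dg_nonneg)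

lemma exists_zero: assumes x: "x \<in> {0..<1}" shows "\<exists>n. dg n x = 0"
proof (rule ccontr)
  assume "\<not> ?thesis"
  then have allB: "(T^^n) x \<in> Bs" for n using dg01[of n x] by (auto simp: dg_def indicator_def split: if_splits)
  define \<delta> where "\<delta> = l (m-1)"
  have dpos: "0 < \<delta>" unfolding \<delta>_def using m1 by (intro lpos) auto
  have dec: "(T^^n) x \<le> x - real n * \<delta>" for n
  proof (induction n)
    case 0 then show ?case by simp
  next
    case (Suc n)
    have "(T^^Suc n) x \<le> (T^^n) x - \<delta>" using Bs_dec[OF allB[of n]] by (simp add: \<delta>_def)
    then show ?case using Suc by (simp add: algebra_simps)
  qed
  obtain n where "x < real n * \<delta>" using reals_Archimedean3[OF dpos] by blast
  moreover have "0 \<le> (T^^n) x" using Tn_range[OF x, of n] by simp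
  ultimately show False using dec[of n] by simp
qed

lemma H_lt1: assumes x: "x \<in> {0..<1}" shows "H x < 1"
proof -
  obtain n where n: "dg n x = 0" using exists_zero[OF x] by blast
  have "H x = S (Suc n) x + H ((T^^Suc n) x) / 2^Suc n" by (rule H_split)
  also have "S (Suc n) x = S n x" using n by (simp add: S_def)
  also have "H ((T^^Suc n) x) / 2^Suc n \<le> 1 / 2^Suc n" using H_le1 by (simp add: divide_right_mono)
  finally have "H x \<le> S n x + 1/2^Suc n" by simp
  also have "\<dots> \<le> 1 - 1/2^n + 1/2^Suc n" using S_le[of n x] by simp
  also have "\<dots> < 1" by (simp add: field_simps)
  finally show ?thesis .
qed

lemma H_out: "x \<notin> {0..<1} \<Longrightarrow> H x = 0"
  unfolding H_eq dg_def using Tn_out[of x] Bs_sub by (auto simp: indicator_def)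

lemma E2_H: "E2 (H x) = H (T x)"
proof (cases "x \<in> {0..<1}")
  case True
  have h: "0 \<le> H (T x)" "H (T x) < 1" using H_nonneg H_lt1 T_range True by auto
  have "2 * H x = dg 0 x + H (T x)" using H_head[of x] by simp
  then show ?thesis unfolding E2_def using dg01[of 0 x] h
    by (auto simp: frac_eq add.commute[of 1] frac_1_eq)
next
  case False then show ?thesis by (simp add: H_out T_out E2_def)
qed

lemma H_meas[measurable]: "H \<in> borel_measurable borel"
  unfolding H_eq dg_def by measurable

lemma E2_meas[measurable]: "E2 \<in> borel_measurable borel"
  unfolding E2_def frac_def by measurable

end

context ds begin

lemma step_n:
  assumes x: "x \<in> {0..<1}" and y: "y \<in> {0..<1}" and lt: "(T^^n) x < (T^^n) y" and eq: "dg n x = dg n y"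
  shows "(T^^Suc n) x < (T^^Suc n) y"
proof -
  have r: "(T^^n) x \<in> {0..<1}" "(T^^n) y \<in> {0..<1}" using Tn_range x y by auto
  have "\<not> ((T^^n) x \<notin> Bs \<and> (T^^n) y \<in> Bs)" using eq by (auto simp: dg_def)
  then show ?thesis using step[OF r lt] by auto
qed

lemma mono_strong:
  assumes x: "x \<in> {0..<1}" and y: "y \<in> {0..<1}" and xy: "x < y"
  shows "H x < H y \<or> (H x = H y \<and> (\<forall>n. (T^^n) x < (T^^n) y))"
proof (cases "\<forall>n. dg n x = dg n y")
  case True
  have "H x = H y" unfolding H_eq using True by simp
  moreover have "(T^^n) x < (T^^n) y" for n
  proof (induction n)
    case 0 then show ?case using xy by simp
  next
    case (Suc n) then show ?case using step_n[OF x y _ True[rule_format]] by blast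
  qed
  ultimately show ?thesis by blast
next
  case False
  define k where "k = (LEAST n. dg n x \<noteq> dg n y)"
  have k: "dg k x \<noteq> dg k y" unfolding k_def using False by (metis (mono_tags, lifting) LeastI)
  have before: "j < k \<Longrightarrow> dg j x = dg j y" for j unfolding k_def using not_less_Least by blast
  have lt: "j \<le> k \<Longrightarrow> (T^^j) x < (T^^j) y" for j
  proof (induction j)
    case 0 then show ?case using xy by simp
  next
    case (Suc j) then show ?case using step_n[OF x y _ before[of j]] by simp
  qed
  have r: "(T^^k) x \<in> {0..<1}" "(T^^k) y \<in> {0..<1}" using Tn_range x y by auto
  have "(T^^k) x \<notin> Bs \<and> (T^^k) y \<in> Bs" using step[OF r lt[of k]] k by (auto simp: dg_def)
  then have dk: "dg k x = 0" "dg k y = 1" by (auto simp: dg_def)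
  have Seq: "S k x = S k y" unfolding S_def using before by simp
  have "H ((T^^k) x) = dg k x / 2 + H ((T^^Suc k) x) / 2" using H_head[of "(T^^k) x"] by (simp add: dg_shift)
  moreover have "H ((T^^Suc k) x) < 1" using H_lt1 Tn_range x by blast
  ultimately have hx: "H ((T^^k) x) < 1/2" using dk by simp
  have "H ((T^^k) y) = dg k y / 2 + H ((T^^Suc k) y) / 2" using H_head[of "(T^^k) y"] by (simp add: dg_shift)
  then have hy: "1/2 \<le> H ((T^^k) y)" using dk H_nonneg[of "(T^^Suc k) y"] by simp
  have "H ((T^^k) x) / 2^k < H ((T^^k) y) / 2^k" using hx hy by (intro divide_strict_right_mono) auto
  then have "H x < H y" using H_split[of x k] H_split[of y k] Seq by simp
  then show ?thesis by simp
qed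

lemma H_mono: "mono_on {0..<1} H"
proof (rule mono_onI)
  fix x y :: real assume "x \<in> {0..<1}" "y \<in> {0..<1}" "x \<le> y"
  then show "H x \<le> H y" using mono_strong[of x y] by (cases "x = y") auto
qed

lemma H_eq_lt: "x \<in> {0..<1} \<Longrightarrow> y \<in> {0..<1} \<Longrightarrow> x < y \<Longrightarrow> H x = H y \<Longrightarrow> (T^^n) x < (T^^n) y"
  using mono_strong[of x y] by auto

lemma loc1:
  assumes x: "x \<in> {0..<1}"
  shows "\<exists>e>0. \<forall>y. x \<le> y \<and> y < x + e \<longrightarrow> T y = T x + (y - x) \<and> (y \<in> Bs \<longleftrightarrow> x \<in> Bs) \<and> y \<in> {0..<1}"
proof (cases "P m \<le> x")
  case True
  then have "x \<in> Bs" using Bs_iff x by auto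
  then obtain i where i: "i < m" "x \<in> ds_B m l i" using B_cover by blast
  show ?thesis
  proof (intro exI[of _ "P (Suc (m+i)) - x"] conjI allI impI)
    show "0 < P (Suc (m+i)) - x" using i by (simp add: B_eq)
    fix y assume y: "x \<le> y \<and> y < x + (P (Suc (m+i)) - x)"
    then have yB: "y \<in> ds_B m l i" using i by (auto simp: B_eq)
    show "T y = T x + (y - x)" using T_B[OF i(1) yB] T_B[OF i] by simp
    show "y \<in> {0..<1}" using B_sub[OF i(1) yB] P_nonneg[of m] by auto
    then show "(y \<in> Bs \<longleftrightarrow> x \<in> Bs)" using Bs_iff \<open>x \<in> Bs\<close> B_sub[OF i(1) yB] by auto
  qed
next
  case False
  then obtain i where i: "i < m" "x \<in> ds_A m l i" using A_cover x by force
  have xn: "x \<notin> Bs" using Bs_iff x False by auto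
  show ?thesis
  proof (intro exI[of _ "P (Suc i) - x"] conjI allI impI)
    show "0 < P (Suc i) - x" using i by (simp add: A_eq)
    fix y assume y: "x \<le> y \<and> y < x + (P (Suc i) - x)"
    then have yA: "y \<in> ds_A m l i" using i by (auto simp: A_eq)
    show "T y = T x + (y - x)" using T_A[OF i(1) yA] T_A[OF i] by simp
    show "y \<in> {0..<1}" using A_sub[OF i(1) yA] P_le1[of m] by auto
    then show "(y \<in> Bs \<longleftrightarrow> x \<in> Bs)" using Bs_iff xn A_sub[OF i(1) yA] by auto
  qed
qed

lemma locn:
  assumes x: "x \<in> {0..<1}"
  shows "\<exists>e>0. \<forall>y. x \<le> y \<and> y < x + e \<longrightarrow> (T^^n) y = (T^^n) x + (y - x) \<and> (\<forall>j<n. dg j y = dg j x) \<and> y \<in> {0..<1}"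
proof (induction n)
  case 0
  obtain e where e: "e > 0" "\<forall>y. x \<le> y \<and> y < x + e \<longrightarrow> T y = T x + (y - x) \<and> (y \<in> Bs \<longleftrightarrow> x \<in> Bs) \<and> y \<in> {0..<1}"
    using loc1[OF x] by blast
  show ?case
  proof (intro exI[of _ e] conjI allI impI)
    fix y assume "x \<le> y \<and> y < x + e"
    from e(2)[rule_format, OF this] show "y \<in> {0..<1}" by (rule conjunct2[OF conjunct2])
  next
    show "0 < e" by (rule e(1))
  qed simp_all
next
  case (Suc n)
  then obtain e1 where e1: "e1 > 0" "\<forall>y. x \<le> y \<and> y < x + e1 \<longrightarrow> (T^^n) y = (T^^n) x + (y - x) \<and> (\<forall>j<n. dg j y = dg j x) \<and> y \<in> {0..<1}"
    by blast
  obtain e2 where e2: "e2 > 0" "\<forall>y. (T^^n) x \<le> y \<and> y < (T^^n) x + e2 \<longrightarrow> T y = T ((T^^n) x) + (y - (T^^n) x) \<and> (y \<in> Bs \<longleftrightarrow> (T^^n) x \<in> Bs) \<and> y \<in> {0..<1}"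
    using loc1[OF Tn_range[OF x, of n]] by blast
  show ?case
  proof (intro exI[of _ "min e1 e2"] conjI allI impI)
    show "0 < min e1 e2" using e1(1) e2(1) by simp
    fix y assume y: "x \<le> y \<and> y < x + min e1 e2"
    then have "x \<le> y \<and> y < x + e1" using min.cobounded1[of e1 e2] by linarith
    note A = e1(2)[rule_format, OF this, THEN conjunct1] e1(2)[rule_format, OF this, THEN conjunct2, THEN conjunct1]
      e1(2)[rule_format, OF this, THEN conjunct2, THEN conjunct2]
    have "(T^^n) x \<le> (T^^n) y \<and> (T^^n) y < (T^^n) x + e2" using A(1) y min.cobounded2[of e1 e2] by linarith
    note B = e2(2)[rule_format, OF this, THEN conjunct1] e2(2)[rule_format, OF this, THEN conjunct2, THEN conjunct1]
    show "(T^^Suc n) y = (T^^Suc n) x + (y - x)" using B(1) A(1) by simp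
    show "y \<in> {0..<1}" using A(3) .
    have "dg n y = dg n x" using B(2) unfolding dg_def indicator_def by presburger
    moreover fix j assume "j < Suc n"
    ultimately show "dg j y = dg j x" using A(2) less_Suc_eq by auto
  qed
qed

lemma H_rcont: assumes x: "x \<in> {0..<1}" shows "continuous (at_right x) H"
  unfolding continuous_within tendsto_iff eventually_at_right_field
proof (intro allI impI)
  fix e :: real assume e: "0 < e"
  obtain N where N: "(1/2::real)^N < e" using real_arch_pow_inv[OF e, of "1/2"] by auto
  obtain d where d: "d > 0" "\<forall>y. x \<le> y \<and> y < x + d \<longrightarrow> (T^^N) y = (T^^N) x + (y - x) \<and> (\<forall>j<N. dg j y = dg j x) \<and> y \<in> {0..<1}"
    using locn[OF x, of N] by blast
  show "\<exists>b>x. \<forall>y>x. y < b \<longrightarrow> dist (H y) (H x) < e"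
  proof (intro exI[of _ "x + d"] conjI allI impI)
    show "x < x + d" using d by simp
    fix y assume y: "x < y" "y < x + d"
    then have "x \<le> y \<and> y < x + d" by simp
    note eqd = d(2)[rule_format, OF this, THEN conjunct2, THEN conjunct1]
    have Seq: "S N y = S N x" unfolding S_def using eqd by simp
    define a where "a = H ((T^^N) y)"
    define b where "b = H ((T^^N) x)"
    have ab: "0 \<le> a" "a \<le> 1" "0 \<le> b" "b \<le> 1" unfolding a_def b_def using H_nonneg H_le1 by auto
    have p: "(0::real) < 2^N" by simp
    have "H y - H x = a / 2^N - b / 2^N"
      using H_split[of y N] H_split[of x N] Seq unfolding a_def b_def by linarith
    also have "\<dots> = (a - b) / 2^N" by (rule diff_divide_distrib[symmetric])
    finally have eq: "H y - H x = (a - b) / 2^N" .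
    have "\<bar>a - b\<bar> \<le> 1" using ab by linarith
    then have "\<bar>a - b\<bar> / 2^N \<le> 1 / 2^N" using p by (intro divide_right_mono) auto
    then have "\<bar>H y - H x\<bar> \<le> 1 / 2^N" unfolding eq using p by (simp add: abs_divide)
    also have "1 / (2::real)^N = (1/2)^N" by (rule power_one_over[symmetric])
    finally show "dist (H y) (H x) < e" using N unfolding dist_real_def by linarith
  qed
qed

end


lemma transl:
  fixes c p q :: real
  assumes E: "E \<in> sets borel"
  shows "(\<integral>\<^sup>+x. indicator E (x + c) * indicator {p..<q} x \<partial>lborel) = (\<integral>\<^sup>+y. indicator E y * indicator {p+c..<q+c} y \<partial>lborel)"
proof -
  define g :: "real \<Rightarrow> ennreal" where "g y = indicator E y * indicator {p+c..<q+c} y" for y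
  have gm: "g \<in> borel_measurable borel" unfolding g_def using E by measurable
  have "(\<integral>\<^sup>+y. g y \<partial>lborel) = (\<integral>\<^sup>+y. g y \<partial>(distr lborel borel ((+) c)))" by (simp add: lborel_distr_plus)
  also have "\<dots> = (\<integral>\<^sup>+x. g (c + x) \<partial>lborel)" by (rule nn_integral_distr) (auto simp: gm)
  also have "\<dots> = (\<integral>\<^sup>+x. indicator E (x + c) * indicator {p..<q} x \<partial>lborel)"
    by (rule nn_integral_cong) (auto simp: g_def indicator_def add.commute)
  finally show ?thesis by (simp add: g_def)
qed

context ds begin

lemma A_meas[measurable]: "ds_A m l i \<in> sets borel" by (simp add: ds_A_def)
lemma B_meas[measurable]: "ds_B m l i \<in> sets borel" by (simp add: ds_B_def)

lemma ind01: "(indicator {0..<1} x :: ennreal) = (\<Sum>i<m. indicator (ds_A m l i) x + indicator (ds_B m l i) x)"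
proof -
  have a: "(\<Sum>i<m. indicator (ds_A m l i) x :: ennreal) = indicator {P 0..<P m} x"
    unfolding A_eq by (rule Ico_chain_indicator) (auto intro: P_mono)
  have b: "(\<Sum>i<m. indicator (ds_B m l i) x :: ennreal) = indicator {P (m+0)..<P (m+m)} x"
  proof -
    have "\<And>k. k<m \<Longrightarrow> P (m+k) \<le> P (Suc (m+k))" using P_mono by auto
    then show ?thesis unfolding B_eq using Ico_chain_indicator[of m "\<lambda>i. P (m+i)" x] by simp
  qed
  have pm: "0 \<le> P m" "P m \<le> 1" using P_nonneg P_le1 by auto
  have "P (m+m) = 1" using P2m by (simp add: mult_2)
  then show ?thesis unfolding sum.distrib a b using pm by (auto simp: indicator_def)
qed

lemma ind01Q: "(indicator {0..<1} y :: ennreal) = (\<Sum>i<m. indicator {Q i + l (m+i)..<Q (Suc i)} y + indicator {Q i..<Q i + l (m+i)} y)"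
proof -
  have "(\<Sum>i<m. indicator {Q i + l (m+i)..<Q (Suc i)} y + indicator {Q i..<Q i + l (m+i)} y :: ennreal)
      = (\<Sum>i<m. indicator {Q i..<Q (Suc i)} y)"
  proof (rule sum.cong)
    fix i assume "i \<in> {..<m}"
    then have "Q i \<le> Q i + l (m+i)" "Q i + l (m+i) \<le> Q (Suc i)" using Q_bounds[of i] lnn[of "m+i"] by auto
    then show "indicator {Q i + l (m+i)..<Q (Suc i)} y + indicator {Q i..<Q i + l (m+i)} y = (indicator {Q i..<Q (Suc i)} y :: ennreal)"
      by (auto simp: indicator_def)
  qed simp
  also have "\<dots> = indicator {Q 0..<Q m} y" by (rule Ico_chain_indicator) (auto intro: Q_step)
  finally show ?thesis using Qm by simp
qed

lemma MP:
  assumes E[measurable]: "E \<in> sets borel"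
  shows "emeasure lborel (T -` E \<inter> {0..<1}) = emeasure lborel (E \<inter> {0..<1})"
proof -
  have s1: "T -` E \<inter> {0..<1} \<in> sets lborel" by measurable
  have s2: "E \<inter> {0..<1} \<in> sets lborel" by measurable
  have pw: "indicator (T -` E \<inter> {0..<1}) x =
     (\<Sum>i<m. indicator E (x + cA i) * indicator (ds_A m l i) x + indicator E (x + - dB i) * indicator (ds_B m l i) x :: ennreal)" for x
  proof -
    have "indicator (T -` E \<inter> {0..<1}) x = (indicator E (T x) * indicator {0..<1} x :: ennreal)"
      by (simp add: indicator_def)
    also have "\<dots> = (\<Sum>i<m. indicator E (T x) * indicator (ds_A m l i) x + indicator E (T x) * indicator (ds_B m l i) x)"
      unfolding ind01 by (simp add: sum_distrib_left distrib_left)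
    also have "\<dots> = (\<Sum>i<m. indicator E (x + cA i) * indicator (ds_A m l i) x + indicator E (x + - dB i) * indicator (ds_B m l i) x)"
    proof (rule sum.cong)
      fix i assume i: "i \<in> {..<m}"
      have 1: "indicator E (T x) * indicator (ds_A m l i) x = (indicator E (x + cA i) * indicator (ds_A m l i) x :: ennreal)"
        using T_A[of i x] i by (cases "x \<in> ds_A m l i") auto
      have 2: "indicator E (T x) * indicator (ds_B m l i) x = (indicator E (x + - dB i) * indicator (ds_B m l i) x :: ennreal)"
        using T_B[of i x] i by (cases "x \<in> ds_B m l i") auto
      show "indicator E (T x) * indicator (ds_A m l i) x + indicator E (T x) * indicator (ds_B m l i) x =
        (indicator E (x + cA i) * indicator (ds_A m l i) x + indicator E (x + - dB i) * indicator (ds_B m l i) x :: ennreal)"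
        using 1 2 by simp
    qed simp
    finally show ?thesis .
  qed
  have "emeasure lborel (T -` E \<inter> {0..<1}) = (\<integral>\<^sup>+x. indicator (T -` E \<inter> {0..<1}) x \<partial>lborel)"
    using s1 by simp
  also have "\<dots> = (\<integral>\<^sup>+x. (\<Sum>i<m. indicator E (x + cA i) * indicator (ds_A m l i) x + indicator E (x + - dB i) * indicator (ds_B m l i) x) \<partial>lborel)"
    unfolding pw ..
  also have "\<dots> = (\<Sum>i<m. (\<integral>\<^sup>+x. indicator E (x + cA i) * indicator (ds_A m l i) x \<partial>lborel) + (\<integral>\<^sup>+x. indicator E (x + - dB i) * indicator (ds_B m l i) x \<partial>lborel))"
    by (subst nn_integral_sum) (measurable, intro sum.cong refl nn_integral_add, measurable)
  also have "\<dots> = (\<Sum>i<m. (\<integral>\<^sup>+y. indicator E y * indicator {Q i + l (m+i)..<Q (Suc i)} y \<partial>lborel) + (\<integral>\<^sup>+y. indicator E y * indicator {Q i..<Q i + l (m+i)} y \<partial>lborel))"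
  proof (rule sum.cong)
    fix i assume i: "i \<in> {..<m}"
    have 1: "(\<integral>\<^sup>+x. indicator E (x + cA i) * indicator (ds_A m l i) x \<partial>lborel) = (\<integral>\<^sup>+y. indicator E y * indicator {Q i + l (m+i)..<Q (Suc i)} y \<partial>lborel)"
      unfolding A_eq transl[OF E] idA1 idA2 ..
    have 2: "(\<integral>\<^sup>+x. indicator E (x + - dB i) * indicator (ds_B m l i) x \<partial>lborel) = (\<integral>\<^sup>+y. indicator E y * indicator {Q i..<Q i + l (m+i)} y \<partial>lborel)"
      unfolding B_eq transl[OF E] using idB1[of i] idB2[of i] i by simp
    show "(\<integral>\<^sup>+x. indicator E (x + cA i) * indicator (ds_A m l i) x \<partial>lborel) + (\<integral>\<^sup>+x. indicator E (x + - dB i) * indicator (ds_B m l i) x \<partial>lborel) =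
      (\<integral>\<^sup>+y. indicator E y * indicator {Q i + l (m+i)..<Q (Suc i)} y \<partial>lborel) + (\<integral>\<^sup>+y. indicator E y * indicator {Q i..<Q i + l (m+i)} y \<partial>lborel)"
      unfolding 1 2 ..
  qed simp
  also have "\<dots> = (\<integral>\<^sup>+y. (\<Sum>i<m. indicator E y * indicator {Q i + l (m+i)..<Q (Suc i)} y + indicator E y * indicator {Q i..<Q i + l (m+i)} y) \<partial>lborel)"
    by (subst nn_integral_sum) (measurable, intro sum.cong refl nn_integral_add[symmetric], measurable)
  also have "\<dots> = (\<integral>\<^sup>+y. indicator E y * indicator {0..<1} y \<partial>lborel)"
    unfolding ind01Q by (simp add: sum_distrib_left distrib_left)
  also have "\<dots> = emeasure lborel (E \<inter> {0..<1})"
  proof -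
    have "(\<lambda>y. indicator E y * indicator {0..<1} y :: ennreal) = indicator (E \<inter> {0..<1})"
      by (auto simp: indicator_def fun_eq_iff)
    then show ?thesis using s2 by simp
  qed
  finally show ?thesis .
qed

lemma MPn:
  assumes E[measurable]: "E \<in> sets borel"
  shows "emeasure lborel ((T^^n) -` E \<inter> {0..<1}) = emeasure lborel (E \<inter> {0..<1})"
proof (induction n)
  case 0 then show ?case by simp
next
  case (Suc n)
  define E' where "E' = (T^^n) -` E \<inter> {0..<1}"
  have E'm: "E' \<in> sets borel" unfolding E'_def by measurable
  have "(T^^Suc n) -` E \<inter> {0..<1} = T -` E' \<inter> {0..<1}"
    unfolding E'_def funpow_Suc_right using T_range by auto
  then have "emeasure lborel ((T^^Suc n) -` E \<inter> {0..<1}) = emeasure lborel (E' \<inter> {0..<1})"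
    using MP[OF E'm] by simp
  also have "E' \<inter> {0..<1} = E'" unfolding E'_def by auto
  finally show ?case using Suc unfolding E'_def by simp
qed

lemma MPn_r:
  assumes E: "E \<in> sets borel"
  shows "measure lborel ((T^^n) -` E \<inter> {0..<1}) = measure lborel (E \<inter> {0..<1})"
  unfolding measure_def using MPn[OF E] by simp

end

context ds begin

lemma fm: "(U::real set) \<in> sets borel \<Longrightarrow> U \<subseteq> {0..<1} \<Longrightarrow> U \<in> fmeasurable lborel"
proof (rule fmeasurableI)
  assume a: "U \<in> sets borel" "U \<subseteq> {0..<1}"
  have "emeasure lborel U \<le> emeasure lborel {0..(1::real)}" by (rule emeasure_mono) (use a in auto)
  then show "emeasure lborel U < \<infinity>" by (simp add: le_less_trans)
qed simp

lemma Icc_fm[simp]: "{a..b::real} \<in> fmeasurable lborel" by (metis cbox_interval fmeasurable_cbox)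

definition L :: "real \<Rightarrow> real set" where "L z = {x \<in> {0..<1}. H x = z}"
definition lam :: "real \<Rightarrow> real" where "lam z = measure lborel (L z)"

lemma L_meas[measurable]: "L z \<in> sets borel"
  unfolding L_def by measurable

lemma L_sub: "L z \<subseteq> {0..<1}" by (auto simp: L_def)
lemma L_fm: "L z \<in> fmeasurable lborel" using fm L_meas L_sub by blast

lemma L_disj: "z \<noteq> z' \<Longrightarrow> L z \<inter> L z' = {}" by (auto simp: L_def)
lemma L_fin: "emeasure lborel (L z) \<noteq> \<infinity>" using L_fm[of z] by (auto simp: fmeasurable_def)

lemma L_int: "is_interval (L z)"
  unfolding is_interval_1
proof (intro ballI allI impI)
  fix a b x assume a: "a \<in> L z" and b: "b \<in> L z" and x: "a \<le> x \<and> x \<le> b"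
  then have x01: "x \<in> {0..<1}" by (auto simp: L_def)
  have a01: "a \<in> {0..<1}" and b01: "b \<in> {0..<1}" using a b by (auto simp: L_def)
  have "H a \<le> H x" "H x \<le> H b" using mono_onD[OF H_mono] a01 b01 x01 x by auto
  then show "x \<in> L z" using a b x01 by (auto simp: L_def)
qed

lemma L_T: "x \<in> L z \<Longrightarrow> T x \<in> L (E2 z)"
  using T_range E2_H by (auto simp: L_def)

lemma L_Tn: "x \<in> L z \<Longrightarrow> (T^^n) x \<in> L ((E2^^n) z)"
  by (induction n) (auto simp: L_T)

lemma lam_nonneg: "0 \<le> lam z" by (simp add: lam_def)

lemma pre_L: "L z \<subseteq> T -` L (E2 z) \<inter> {0..<1}" using L_T L_sub by auto

lemma MP_r: "E \<in> sets borel \<Longrightarrow> measure lborel (T -` E \<inter> {0..<1}) = measure lborel (E \<inter> {0..<1})"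
  using MPn_r[of E 1] by simp

lemma lam_mono: "lam z \<le> lam (E2 z)"
proof -
  have "lam z \<le> measure lborel (T -` L (E2 z) \<inter> {0..<1})"
    unfolding lam_def by (rule measure_mono_fmeasurable[OF pre_L]) (auto intro!: fm)
  also have "\<dots> = lam (E2 z)" unfolding lam_def MP_r[OF L_meas] using L_sub by (simp add: Int_absorb2)
  finally show ?thesis .
qed

lemma lam_two: assumes "z \<noteq> z'" "E2 z = E2 z'" shows "lam z + lam z' \<le> lam (E2 z)"
proof -
  have "lam z + lam z' = measure lborel (L z \<union> L z')"
    unfolding lam_def using assms(1) L_fm[of z] L_fm[of z']
    by (intro measure_Union[symmetric] L_fin) (auto simp: L_disj)
  also have "\<dots> \<le> measure lborel (T -` L (E2 z) \<inter> {0..<1})"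
    using pre_L[of z] pre_L[of z'] assms(2) by (intro measure_mono_fmeasurable) (auto intro!: fm)
  also have "\<dots> = lam (E2 z)" unfolding lam_def MP_r[OF L_meas] using L_sub by (simp add: Int_absorb2)
  finally show ?thesis .
qed

lemma lam_sum_le1: "finite W \<Longrightarrow> (\<Sum>w\<in>W. lam w) \<le> 1"
proof -
  assume W: "finite W"
  have "(\<Sum>w\<in>W. lam w) = measure lborel (\<Union>w\<in>W. L w)"
    unfolding lam_def using W L_fm
    by (intro measure_finite_Union[symmetric] L_fin) (auto simp: disjoint_family_on_def L_disj)
  also have "\<dots> \<le> measure lborel {0..(1::real)}"
    using W by (intro measure_mono_fmeasurable) (auto simp: L_def)
  finally show ?thesis by simp
qed

lemma periodic_val: assumes pos: "lam z > 0" shows "\<exists>p>0. (E2^^p) z = z"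
proof -
  define zs where "zs n = (E2^^n) z" for n
  have zsS: "zs (Suc n) = E2 (zs n)" for n by (simp add: zs_def)
  have chain: "i \<le> j \<Longrightarrow> lam (zs i) \<le> lam (zs j)" for i j
    by (rule lift_Suc_mono_le[of "\<lambda>n. lam (zs n)"]) (auto simp: zsS lam_mono)
  have ge: "lam z \<le> lam (zs n)" for n using chain[of 0 n] by (simp add: zs_def)
  have fin: "finite (range zs)"
  proof (rule ccontr)
    assume inf: "\<not> finite (range zs)"
    define K where "K = nat \<lceil>1 / lam z\<rceil> + 1"
    obtain W where W: "finite W" "card W = K" "W \<subseteq> range zs" using infinite_arbitrarily_large[OF inf] by blast
    have "(\<Sum>w\<in>W. lam z) \<le> (\<Sum>w\<in>W. lam w)" using W(3) ge by (intro sum_mono) auto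
    then have "real K * lam z \<le> 1" using lam_sum_le1[OF W(1)] W(2) by simp
    moreover have "1 / lam z < real K" unfolding K_def by linarith
    then have "1 < real K * lam z" using pos by (simp add: field_simps)
    ultimately show False by simp
  qed
  have "\<not> inj zs"
  proof
    assume "inj zs"
    then have "infinite (range zs)" using finite_imageD by blast
    then show False using fin by simp
  qed
  then obtain i j where ij: "i \<noteq> j" "zs i = zs j" unfolding inj_def by blast
  have ex: "\<exists>i. \<exists>j>i. zs i = zs j"
  proof (cases "i < j")
    case True then show ?thesis using ij by blast
  next
    case False then show ?thesis using ij by (intro exI[of _ j] exI[of _ i]) auto
  qed
  define i0 where "i0 = (LEAST i. \<exists>j>i. zs i = zs j)"
  have i0: "\<exists>j>i0. zs i0 = zs j" unfolding i0_def using ex by (rule LeastI_ex)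
  then obtain j0 where j0: "j0 > i0" "zs i0 = zs j0" by blast
  have nl: "k < i0 \<Longrightarrow> \<not> (\<exists>j>k. zs k = zs j)" for k unfolding i0_def by (rule not_less_Least)
  show ?thesis
  proof (cases i0)
    case 0 then show ?thesis using j0 by (intro exI[of _ j0]) (auto simp: zs_def)
  next
    case (Suc i')
    then obtain j' where j': "j0 = Suc j'" using j0 by (cases j0) auto
    have "i' < j'" using j0 Suc j' by simp
    then have ne: "zs i' \<noteq> zs j'" using nl[of i'] Suc by auto
    have eq: "E2 (zs i') = E2 (zs j')" using j0 Suc j' by (simp add: zsS)
    have "lam (zs i') + lam (zs j') \<le> lam (zs i0)" using lam_two[OF ne eq] Suc by (simp add: zsS)
    moreover have "lam (zs i0) \<le> lam (zs j')" using chain \<open>i' < j'\<close> Suc by simp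
    moreover have "lam z \<le> lam (zs i')" by (rule ge)
    ultimately show ?thesis using pos by simp
  qed
qed

lemma lam_pos_nonempty: "lam z > 0 \<Longrightarrow> L z \<noteq> {}" by (auto simp: lam_def)

lemma fixed:
  assumes pos: "lam z > 0"
  shows "\<exists>n>0. \<forall>x\<in>L z. (T^^n) x = x"
proof -
  obtain p where p: "p > 0" "(E2^^p) z = z" using periodic_val[OF pos] by blast
  define f where "f = T^^p"
  have fL: "x \<in> L z \<Longrightarrow> f x \<in> L z" for x using L_Tn[of x z p] p by (simp add: f_def)
  have fmono: "x \<in> L z \<Longrightarrow> y \<in> L z \<Longrightarrow> x < y \<Longrightarrow> f x < f y" for x y
    unfolding f_def using H_eq_lt by (auto simp: L_def)
  have ne: "L z \<noteq> {}" using lam_pos_nonempty[OF pos] .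
  have bb: "bdd_below (L z)" "bdd_above (L z)"
    by (auto intro!: bdd_belowI[of _ 0] bdd_aboveI[of _ 1] simp: L_def)
  define a where "a = Inf (L z)"
  define b where "b = Sup (L z)"
  have aL: "y \<in> L z \<Longrightarrow> a \<le> y" for y unfolding a_def using bb by (intro cInf_lower) auto
  have bL: "y \<in> L z \<Longrightarrow> y \<le> b" for y unfolding b_def using bb by (intro cSup_upper) auto
  have conv: "u \<in> L z \<Longrightarrow> v \<in> L z \<Longrightarrow> u \<le> y \<Longrightarrow> y \<le> v \<Longrightarrow> y \<in> L z" for u v y
    using L_int[of z] unfolding is_interval_1 by blast
  have fmeas: "f -` E \<inter> {0..<1} \<in> sets borel" if "E \<in> sets borel" for E
    unfolding f_def using that by measurable
  show ?thesis
  proof (intro exI[of _ p] conjI ballI)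
    show "0 < p" by (rule p(1))
    fix x assume x: "x \<in> L z"
    have fx: "f x \<in> L z" using fL[OF x] .
    have "x \<le> f x"
    proof -
      have sub: "{a<..<x} \<subseteq> f -` {a..<f x} \<inter> {0..<1}"
      proof
        fix y assume y: "y \<in> {a<..<x}"
        then have "Inf (L z) < y" by (simp add: a_def)
        then obtain y' where "y' \<in> L z" "y' < y" using cInf_less_iff[OF ne bb(1)] by blast
        then have yL: "y \<in> L z" using conv[of y' x y] x y by auto
        then show "y \<in> f -` {a..<f x} \<inter> {0..<1}" using aL[OF fL[OF yL]] fmono[OF yL x] y yL by (auto simp: L_def)
      qed
      have "x - a = measure lborel {a<..<x}" using aL[OF x] by simp
      also have "\<dots> \<le> measure lborel (f -` {a..<f x} \<inter> {0..<1})"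
        by (rule measure_mono_fmeasurable[OF sub]) (auto intro!: fm fmeas)
      also have "\<dots> = measure lborel ({a..<f x} \<inter> {0..<1})" unfolding f_def by (rule MPn_r) simp
      also have "\<dots> \<le> measure lborel {a..f x}" by (rule measure_mono_fmeasurable) auto
      also have "\<dots> = f x - a" using aL[OF fx] by simp
      finally show ?thesis by simp
    qed
    moreover have "f x \<le> x"
    proof -
      have sub: "{x<..<b} \<subseteq> f -` {f x<..b} \<inter> {0..<1}"
      proof
        fix y assume y: "y \<in> {x<..<b}"
        then have "y < Sup (L z)" by (simp add: b_def)
        then obtain y' where "y' \<in> L z" "y < y'" using less_cSup_iff[OF ne bb(2)] by blast
        then have yL: "y \<in> L z" using conv[of x y' y] x y by auto
        then show "y \<in> f -` {f x<..b} \<inter> {0..<1}" using bL[OF fL[OF yL]] fmono[OF x yL] y yL by (auto simp: L_def)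
      qed
      have "b - x = measure lborel {x<..<b}" using bL[OF x] by simp
      also have "\<dots> \<le> measure lborel (f -` {f x<..b} \<inter> {0..<1})"
        by (rule measure_mono_fmeasurable[OF sub]) (auto intro!: fm fmeas)
      also have "\<dots> = measure lborel ({f x<..b} \<inter> {0..<1})" unfolding f_def by (rule MPn_r) simp
      also have "\<dots> \<le> measure lborel {f x..b}" by (rule measure_mono_fmeasurable) auto
      also have "\<dots> = b - f x" using bL[OF fx] by simp
      finally show ?thesis by simp
    qed
    ultimately show "(T^^p) x = x" by (simp add: f_def)
  qed
qed

end

context ds begin

lemma H_Leb: "H \<in> borel_measurable Leb01"
  unfolding Leb01_def by (rule measurable_restrict_space1) simp

lemma inv_nu:
  assumes s: "sets \<nu> = sets borel" and inv: "distr \<nu> borel T = \<nu>"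
  shows "distr (distr \<nu> borel H) borel E2 = distr \<nu> borel H"
proof -
  have Hm: "H \<in> measurable \<nu> borel" by (subst measurable_cong_sets[OF s refl]) (rule H_meas)
  have Tm: "T \<in> measurable \<nu> borel" by (subst measurable_cong_sets[OF s refl]) (rule T_meas)
  have "distr (distr \<nu> borel H) borel E2 = distr \<nu> borel (E2 \<circ> H)" by (rule distr_distr[OF E2_meas Hm])
  also have "E2 \<circ> H = H \<circ> T" by (simp add: fun_eq_iff E2_H)
  also have "distr \<nu> borel (H \<circ> T) = distr (distr \<nu> borel T) borel H" by (rule distr_distr[OF H_meas Tm, symmetric])
  also have "\<dots> = distr \<nu> borel H" using inv by simp
  finally show ?thesis .
qed

lemma Leb01_space: "space Leb01 = {0..<1}" by (simp add: Leb01_def space_restrict_space)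

lemma Leb01_em: "A \<subseteq> {0..<1} \<Longrightarrow> emeasure Leb01 A = emeasure lborel A"
  unfolding Leb01_def by (rule emeasure_restrict_space) auto

lemma mu_inv: "distr (ds_mu m l) borel E2 = ds_mu m l"
proof -
  define \<nu> where "\<nu> = distr Leb01 borel (\<lambda>x. x)"
  have idm: "(\<lambda>x. x) \<in> measurable Leb01 borel" unfolding Leb01_def by (rule measurable_restrict_space1) simp
  have s: "sets \<nu> = sets borel" by (simp add: \<nu>_def)
  have mu: "ds_mu m l = distr \<nu> borel H"
    unfolding ds_mu_def \<nu>_def by (subst distr_distr[OF H_meas idm]) (simp add: comp_def)
  have em: "emeasure \<nu> B = emeasure lborel (B \<inter> {0..<1})" if "B \<in> sets borel" for B
  proof -
    have "emeasure \<nu> B = emeasure Leb01 ((\<lambda>x. x) -` B \<inter> space Leb01)"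
      unfolding \<nu>_def using that by (intro emeasure_distr idm) auto
    also have "\<dots> = emeasure lborel (B \<inter> {0..<1})" by (subst Leb01_em) (auto simp: Leb01_space)
    finally show ?thesis .
  qed
  have inv: "distr \<nu> borel T = \<nu>"
  proof (rule measure_eqI)
    show "sets (distr \<nu> borel T) = sets \<nu>" using s by simp
    fix A assume "A \<in> sets (distr \<nu> borel T)"
    then have A: "A \<in> sets borel" by simp
    have Tm: "T \<in> measurable \<nu> borel" by (subst measurable_cong_sets[OF s refl]) (rule T_meas)
    have sp: "space \<nu> = UNIV" using sets_eq_imp_space_eq[OF s] by simp
    have "emeasure (distr \<nu> borel T) A = emeasure \<nu> (T -` A \<inter> space \<nu>)" by (rule emeasure_distr[OF Tm A])
    also have "\<dots> = emeasure lborel (T -` A \<inter> {0..<1})" unfolding sp using A measurable_sets[OF T_meas A] by (subst em) auto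
    also have "\<dots> = emeasure lborel (A \<inter> {0..<1})" by (rule MP[OF A])
    also have "\<dots> = emeasure \<nu> A" using em[OF A] by simp
    finally show "emeasure (distr \<nu> borel T) A = emeasure \<nu> A" .
  qed
  show ?thesis unfolding mu by (rule inv_nu[OF s inv])
qed

lemma mu_pt: "emeasure (ds_mu m l) {z} = emeasure lborel (L z)"
proof -
  have "emeasure (ds_mu m l) {z} = emeasure Leb01 (H -` {z} \<inter> space Leb01)"
    unfolding ds_mu_def by (rule emeasure_distr[OF H_Leb]) simp
  also have "H -` {z} \<inter> space Leb01 = L z" by (auto simp: Leb01_space L_def)
  also have "emeasure Leb01 (L z) = emeasure lborel (L z)" by (rule Leb01_em[OF L_sub])
  finally show ?thesis .
qed

lemma mu_pos_iff: "emeasure (ds_mu m l) {z} > 0 \<longleftrightarrow> lam z > 0"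
  unfolding mu_pt lam_def emeasure_eq_measure2[OF L_fm] by simp

lemma lam_pos_iff: "lam z > 0 \<longleftrightarrow> (\<exists>a\<in>L z. \<exists>b\<in>L z. a < b)"
proof
  assume pos: "lam z > 0"
  show "\<exists>a\<in>L z. \<exists>b\<in>L z. a < b"
  proof (rule ccontr)
    assume no: "\<not> ?thesis"
    obtain x0 where x0: "x0 \<in> L z" using lam_pos_nonempty[OF pos] by blast
    have sub: "L z \<subseteq> {x0..x0}"
    proof
      fix y assume yL: "y \<in> L z"
      have "\<not> y < x0" using no yL x0 by blast
      moreover have "\<not> x0 < y" using no yL x0 by blast
      ultimately show "y \<in> {x0..x0}" by simp
    qed
    have "lam z \<le> measure lborel {x0..x0}" unfolding lam_def
      by (rule measure_mono_fmeasurable[OF sub]) (simp_all only: L_meas sets_lborel Icc_fm)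
    then show False using pos by simp
  qed
next
  assume "\<exists>a\<in>L z. \<exists>b\<in>L z. a < b"
  then obtain a b where ab: "a \<in> L z" "b \<in> L z" "a < b" by blast
  have conv: "u \<in> L z \<Longrightarrow> v \<in> L z \<Longrightarrow> u \<le> y \<Longrightarrow> y \<le> v \<Longrightarrow> y \<in> L z" for u v y
    using L_int[of z] unfolding is_interval_1 by blast
  have sub: "{a..b} \<subseteq> L z" using conv[OF ab(1) ab(2)] by auto
  have "measure lborel {a..b} \<le> lam z" unfolding lam_def
    by (rule measure_mono_fmeasurable[OF sub]) (simp_all only: L_fm sets_lborel Icc_fm atLeastAtMost_borel)
  then show "lam z > 0" using ab by simp
qed

lemma S_fin: "finite (range (S n))"
proof (induction n)
  case 0 then show ?case by (simp add: S_def)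
next
  case (Suc n)
  have "range (S (Suc n)) \<subseteq> (\<lambda>(s, d). s + d / 2^(n+1)) ` (range (S n) \<times> {0, 1})"
  proof
    fix v assume "v \<in> range (S (Suc n))"
    then obtain x where v: "v = S (Suc n) x" by blast
    then have "v = (\<lambda>(s, d). s + d / 2^(n+1)) (S n x, dg n x)" by (simp add: S_def)
    moreover have "(S n x, dg n x) \<in> range (S n) \<times> {0, 1}" using dg01[of n x] by blast
    ultimately show "v \<in> (\<lambda>(s, d). s + d / 2^(n+1)) ` (range (S n) \<times> {0, 1})" by (rule image_eqI)
  qed
  moreover have "finite ((\<lambda>(s, d). s + d / 2^(n+1)) ` (range (S n) \<times> {0::real, 1}))" using Suc by simp
  ultimately show ?case by (rule finite_subset)
qed

lemma fin_img:
  assumes n: "n > 0" and fx: "\<forall>x\<in>{a..b}. (T^^n) x = x"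
  shows "finite (H ` {a..b})"
proof -
  have t: "(1::real) < 2^n" using n by (simp add: one_less_power)
  then have "1 / (2::real)^n < 1" by simp
  then have c: "(1::real) - 1/2^n \<noteq> 0" by linarith
  have "H ` {a..b} \<subseteq> (\<lambda>s. s / (1 - 1/2^n)) ` range (S n)"
  proof
    fix v assume "v \<in> H ` {a..b}"
    then obtain x where x: "x \<in> {a..b}" "v = H x" by blast
    have "(T^^n) x = x" using fx x by blast
    then have e1: "H x = S n x + H x / 2^n" using H_split[of x n] by simp
    have "H x * (1 - 1/2^n) = H x - H x / 2^n" by (simp add: right_diff_distrib)
    then have "H x * (1 - 1/2^n) = S n x" using e1 by linarith
    then have "H x = S n x / (1 - 1/2^n)" using c by (simp add: nonzero_eq_divide_eq)
    then show "v \<in> (\<lambda>s. s / (1 - 1/2^n)) ` range (S n)" using x by blast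
  qed
  then show ?thesis using S_fin finite_subset by blast
qed

lemma per_mod: assumes n: "n > 0" and p: "(T^^n) x = x" shows "(T^^k) x = (T^^(k mod n)) x"
proof -
  have q: "(T^^(q*n)) x = x" for q
  proof (induction q)
    case 0 then show ?case by simp
  next
    case (Suc q)
    have "(T^^(Suc q * n)) x = (T^^n) ((T^^(q*n)) x)" by (simp add: funpow_add)
    then show ?case using Suc p by simp
  qed
  have "(T^^(k mod n + (k div n) * n)) x = (T^^(k mod n)) ((T^^((k div n) * n)) x)" by (simp only: funpow_add comp_apply)
  moreover have "k mod n + (k div n) * n = k" by (rule mod_div_mult_eq)
  ultimately show ?thesis using q by simp
qed

lemma no_periodic_min:
  assumes x: "x \<in> {0..<1}" and n: "n > 0" and p: "(T^^n) x = x"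
  shows "\<not> ds_minimal m l"
proof
  assume min: "ds_minimal m l"
  define F where "F = (\<lambda>j. (T^^j) x) ` {..<n}"
  have finF: "finite F" by (simp add: F_def)
  have inF: "(T^^k) x \<in> F" for k
  proof -
    have "k mod n < n" using n by simp
    then have "(T^^(k mod n)) x \<in> F" unfolding F_def by blast
    then show ?thesis using per_mod[OF n p, of k] by simp
  qed
  have sub: "ds_orbit m l x \<subseteq> F"
  proof
    fix y assume "y \<in> ds_orbit m l x"
    then obtain k where y: "y \<in> {0..<1}" "(T^^k) x = y \<or> (T^^k) y = x" unfolding ds_orbit_def by blast
    show "y \<in> F"
    proof (cases "(T^^k) x = y")
      case True then show ?thesis using inF by blast
    next
      case False
      then have yk: "(T^^k) y = x" using y(2) by blast
      obtain n' where n': "n = Suc n'" using n by (cases n) auto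
      define j where "j = k * n'"
      have kj: "k + j = k * n" unfolding j_def n' by simp
      have "(T^^k) ((T^^j) x) = (T^^(k+j)) x" by (simp only: funpow_add comp_apply)
      also have "\<dots> = (T^^(k*n)) x" unfolding kj ..
      also have "\<dots> = x" using per_mod[OF n p, of "k*n"] by simp
      finally have eq: "(T^^k) ((T^^j) x) = (T^^k) y" using yk by simp
      have "(T^^j) x = y" by (rule inj_onD[OF Tn_inj[of k] eq Tn_range[OF x, of j] y(1)])
      then show ?thesis using inF[of j] by simp
    qed
  qed
  have "closure (ds_orbit m l x) \<subseteq> F" by (rule closure_minimal[OF sub finite_imp_closed[OF finF]])
  moreover have "{0..<1} \<subseteq> closure (ds_orbit m l x)" using min x unfolding ds_minimal_def by blast
  ultimately have "{0..<(1::real)} \<subseteq> F" by (rule order.trans[rotated])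
  then have "finite {0..<(1::real)}" by (rule finite_subset[OF _ finF])
  moreover have "\<not> finite {0..<(1::real)}" by (rule infinite_Ico) simp
  ultimately show False by contradiction
qed

lemma strict: assumes "ds_minimal m l" shows "strict_mono_on {0..<1} H"
proof (rule strict_mono_onI)
  fix x y :: real assume x: "x \<in> {0..<1}" and y: "y \<in> {0..<1}" and xy: "x < y"
  show "H x < H y"
  proof (rule ccontr)
    assume "\<not> H x < H y"
    then have eq: "H x = H y" using mono_strong[OF x y xy] by auto
    have "x \<in> L (H x)" "y \<in> L (H x)" using x y eq by (auto simp: L_def)
    then have "lam (H x) > 0" using lam_pos_iff xy by blast
    then obtain n where n: "n > 0" "\<forall>z\<in>L (H x). (T^^n) z = z" using fixed by blast
    then have "(T^^n) x = x" using \<open>x \<in> L (H x)\<close> by blast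
    then show False using no_periodic_min[OF x n(1)] assms by blast
  qed
qed

end

theorem theorem4:
  fixes m :: nat and l :: "nat \<Rightarrow> real"
  assumes valid: "ds_valid m l"
  shows
    \<comment> \<open>(a)\<close>
    "(\<forall>x\<in>{0..<1}. E2 (ds_H m l x) = ds_H m l (ds_T m l x))
     \<comment> \<open>(b)\<close>
     \<and> ds_H m l \<in> borel_measurable Leb01
     \<and> distr (ds_mu m l) borel E2 = ds_mu m l
     \<and> (\<forall>\<nu> :: real measure. prob_space \<nu> \<and> sets \<nu> = sets borel \<and> emeasure \<nu> {0..<1} = 1
          \<and> distr \<nu> borel (ds_T m l) = \<nu>
          \<longrightarrow> distr (distr \<nu> borel (ds_H m l)) borel E2 = distr \<nu> borel (ds_H m l))
     \<comment> \<open>(c)\<close>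
     \<and> (\<forall>x\<in>{0..<1}. continuous (at_right x) (ds_H m l))
     \<comment> \<open>(d)\<close>
     \<and> mono_on {0..<1} (ds_H m l)
     \<comment> \<open>(e)\<close>
     \<and> (\<forall>z\<in>{0..<1}.
          let P = {x\<in>{0..<1}. ds_H m l x = z} in
          (emeasure (ds_mu m l) {z} > 0 \<longleftrightarrow> is_interval P \<and> (\<exists>a\<in>P. \<exists>b\<in>P. a < b))
          \<and> (emeasure (ds_mu m l) {z} > 0 \<longrightarrow> (\<exists>n>0. \<forall>x\<in>P. (ds_T m l ^^ n) x = x)))
     \<and> (\<forall>a b. 0 \<le> a \<and> a < b \<and> b < 1 \<and> (\<exists>n>0. \<forall>x\<in>{a..b}. (ds_T m l ^^ n) x = x)
          \<longrightarrow> finite (ds_H m l ` {a..b}))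
     \<comment> \<open>(f)\<close>
     \<and> (ds_minimal m l \<longrightarrow> strict_mono_on {0..<1} (ds_H m l) \<and> inj_on (ds_H m l) {0..<1})"
proof -
  interpret ds m l by (rule ds.intro[OF valid])
  have e: "let P = {x\<in>{0..<1}. ds_H m l x = z} in
          (emeasure (ds_mu m l) {z} > 0 \<longleftrightarrow> is_interval P \<and> (\<exists>a\<in>P. \<exists>b\<in>P. a < b))
          \<and> (emeasure (ds_mu m l) {z} > 0 \<longrightarrow> (\<exists>n>0. \<forall>x\<in>P. (ds_T m l ^^ n) x = x))" for z
  proof -
    have PL: "{x\<in>{0..<1}. ds_H m l x = z} = L z" by (simp add: L_def)
    show ?thesis unfolding Let_def PL mu_pos_iff using lam_pos_iff[of z] L_int[of z] fixed[of z] by blast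
  qed
  have f: "ds_minimal m l \<longrightarrow> strict_mono_on {0..<1} (ds_H m l) \<and> inj_on (ds_H m l) {0..<1}"
    using strict strict_mono_on_imp_inj_on by blast
  have fin: "\<forall>a b. 0 \<le> a \<and> a < b \<and> b < 1 \<and> (\<exists>n>0. \<forall>x\<in>{a..b}. (ds_T m l ^^ n) x = x)
          \<longrightarrow> finite (ds_H m l ` {a..b})"
    using fin_img by blast
  have nu: "\<forall>\<nu> :: real measure. prob_space \<nu> \<and> sets \<nu> = sets borel \<and> emeasure \<nu> {0..<1} = 1
          \<and> distr \<nu> borel (ds_T m l) = \<nu>
          \<longrightarrow> distr (distr \<nu> borel (ds_H m l)) borel E2 = distr \<nu> borel (ds_H m l)"
    using inv_nu by blast
  have a: "\<forall>x\<in>{0..<1}. E2 (ds_H m l x) = ds_H m l (ds_T m l x)" using E2_H by blast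
  have c: "\<forall>x\<in>{0..<1}. continuous (at_right x) (ds_H m l)" using H_rcont by blast
  show ?thesis
    using a H_Leb mu_inv nu c H_mono e fin f by (intro conjI ballI) auto
qed


end
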